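(* Let $n\ge2$ and let $S=S_1S_2\cdots$ be as defined in the context. Suppose $\mathrm{PPM}^*$ has already processed $S_1\cdots S_{n-1}$. Then once it has processed the first $2^n+n$ bits of $S_n$ (i.e. $S_n[0..2^n+n-1]$), its model contains a context for every $w\in\{0,1\}^n$.
   Context: Strings are indexed from $0$; $x[i..j]$ is the substring from position $i$ to $j$; $x^j$ is $j$-fold concatenation. de Bruijn strings: for $n\ge1$, a de Bruijn string of order $n$ is a binary string $x$ of length $2^n$ such that every $w\in\{0,1\}^n$ occurs exactly once as a substring of $x\cdot x[0..n-2]$. $db(n)$ is the lexicographically least one, produced by Martin's algorithm: start with $x=1^{n-1}$; while possible, append a bit (preferring $0$ over $1$) so that all length-$n$ substrings of $x$ remain distinct; then delete the prefix $1^{n-1}$. For $0\le i<2^n$, $db_i(n)=db(n)[i..2^n-1]\cdot db(n)[0..i-1]$. The sequence $S$: for $n\ge1$ write $n=2^st$ with $t$ odd, let $B_{n,i}=db_i(n)^t$ for $0\le i<2^s$, $S_n=B_{n,0}B_{n,1}\cdots B_{n,2^s-1}$, and $S=S_1S_2\cdots$. The $\mathrm{PPM}^*$ model after reading a prefix $x$: each stored context $c$ records, for each bit $b$, the number of occurrences of $cb$ in $x$. The stored contexts are the empty context and, whenever a string $w$ occurs at least twice as a substring of $x$, the contexts $wb$ for each bit $b$ such that $wb$ occurs in $x$ followed by a further bit (a context is only created once a bit following it has been seen, so that it has a prediction). The model is updated after each bit read. *)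

theory Defs
  imports "HOL-Computational_Algebra.Primes"
begin

(* Binary strings are bool lists; False = bit 0, True = bit 1. *)

definition windows :: "nat \<Rightarrow> bool list \<Rightarrow> bool list list" where
  "windows n y = map (\<lambda>i. take n (drop i y)) [0..<Suc (length y) - n]"

definition all_distinct_windows :: "nat \<Rightarrow> bool list \<Rightarrow> bool" where
  "all_distinct_windows n y = distinct (windows n y)"

definition martin_step :: "nat \<Rightarrow> bool list \<Rightarrow> bool list" where
  "martin_step n x =
     (if all_distinct_windows n (x @ [False]) then x @ [False]
      else if all_distinct_windows n (x @ [True]) then x @ [True]
      else x)"

(* Every append creates a new distinct
   length-n substring, so at most 2^n appends are possible; hence after 2^n
   iterations of martin_step the algorithm has stopped (fixed point reached). *)
definition martin :: "nat \<Rightarrow> bool list" where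
  "martin n = (martin_step n ^^ (2 ^ n)) (replicate (n - 1) True)"

definition db :: "nat \<Rightarrow> bool list" where
  "db n = drop (n - 1) (martin n)"

definition db_rot :: "nat \<Rightarrow> nat \<Rightarrow> bool list" where
  "db_rot n i = drop i (db n) @ take i (db n)"

definition two_exp :: "nat \<Rightarrow> nat" where
  "two_exp n = multiplicity (2::nat) n"

definition odd_part :: "nat \<Rightarrow> nat" where
  "odd_part n = n div 2 ^ two_exp n"

definition B_blk :: "nat \<Rightarrow> nat \<Rightarrow> bool list" where
  "B_blk n i = concat (replicate (odd_part n) (db_rot n i))"

definition S_blk :: "nat \<Rightarrow> bool list" where
  "S_blk n = concat (map (B_blk n) [0..<2 ^ two_exp n])"

definition S_prefix :: "nat \<Rightarrow> bool list" where
  "S_prefix n = concat (map S_blk [1..<n])"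

definition occurrences :: "bool list \<Rightarrow> bool list \<Rightarrow> nat set" where
  "occurrences w x = {i. i + length w \<le> length x \<and> take (length w) (drop i x) = w}"

definition occurs :: "bool list \<Rightarrow> bool list \<Rightarrow> bool" where
  "occurs w x \<longleftrightarrow> occurrences w x \<noteq> {}"

definition ppm_contexts :: "bool list \<Rightarrow> bool list set" where
  "ppm_contexts x = {[]} \<union>
     {w @ [b] | w b. card (occurrences w x) \<ge> 2 \<and> (\<exists>c. occurs (w @ [b, c]) x)}"

end

theory Submission
  imports Defs
begin

definition Dist :: "nat \<Rightarrow> bool list \<Rightarrow> bool" where
  "Dist n y \<longleftrightarrow> (\<forall>i j. i + n \<le> length y \<longrightarrow> j + n \<le> length y \<longrightarrow>
     take n (drop i y) = take n (drop j y) \<longrightarrow> i = j)"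

lemma adw_Dist: "all_distinct_windows n y \<longleftrightarrow> Dist n y"
  unfolding all_distinct_windows_def windows_def Dist_def distinct_map inj_on_def
  by (auto simp: less_diff_conv)

lemma take_drop_app: "i + k \<le> length y \<Longrightarrow> take k (drop i (y @ zs)) = take k (drop i y)"
  by simp

lemma not_Dist_snoc:
  assumes "n \<ge> 1" "n - 1 \<le> length y" "Dist n y" "\<not> Dist n (y @ [b])"
  shows "\<exists>j. j + n \<le> length y \<and> take n (drop j y) = drop (length y - (n - 1)) y @ [b]"
proof -
  from assms(4) obtain i j where ij: "i + n \<le> Suc (length y)" "j + n \<le> Suc (length y)"
    "take n (drop i (y @ [b])) = take n (drop j (y @ [b]))" "i \<noteq> j"
    unfolding Dist_def by auto
  have last: "take n (drop k (y @ [b])) = drop (length y - (n - 1)) y @ [b]"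
    if "k + n = Suc (length y)" for k
  proof -
    have "k = length y - (n - 1)" using that assms(1) by linarith
    then show ?thesis using that by simp
  qed
  consider "i + n \<le> length y" "j + n \<le> length y" | "i + n = Suc (length y)" | "j + n = Suc (length y)"
    using ij by linarith
  then show ?thesis
  proof cases
    case 1
    then show ?thesis using ij assms(3) unfolding Dist_def by simp
  next
    case 2
    then have "j + n \<le> length y" using ij by auto
    then show ?thesis using ij(3) last[OF 2] by (intro exI[of _ j]) simp
  next
    case 3
    then have "i + n \<le> length y" using ij by auto
    then show ?thesis using ij(3) last[OF 3] by (intro exI[of _ i]) simp
  qed
qed

definition Inv :: "nat \<Rightarrow> bool list \<Rightarrow> bool" where
  "Inv n y \<longleftrightarrow> n - 1 \<le> length y \<and> take (n - 1) y = replicate (n - 1) True \<and> Dist n y \<and>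
    (\<forall>j. j + n \<le> length y \<longrightarrow> y ! (j + n - 1) \<longrightarrow>
       (\<exists>j'. j' + n \<le> j + n - 1 \<and> take n (drop j' y) = take (n - 1) (drop j y) @ [False]))"

lemma Inv_snoc:
  assumes n1: "n \<ge> 1" and I: "Inv n y" and D: "Dist n (y @ [b])"
    and bT: "b \<Longrightarrow> \<not> Dist n (y @ [False])"
  shows "Inv n (y @ [b])"
proof -
  have len: "n - 1 \<le> length y" and st: "take (n - 1) y = replicate (n - 1) True" and
    G: "\<And>j. j + n \<le> length y \<Longrightarrow> y ! (j + n - 1) \<Longrightarrow>
       (\<exists>j'. j' + n \<le> j + n - 1 \<and> take n (drop j' y) = take (n - 1) (drop j y) @ [False])"
    using I unfolding Inv_def by auto
  have "\<exists>j'. j' + n \<le> j + n - 1 \<and> take n (drop j' (y @ [b])) = take (n - 1) (drop j (y @ [b])) @ [False]"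
    if j: "j + n \<le> length (y @ [b])" "(y @ [b]) ! (j + n - 1)" for j
  proof (cases "j + n \<le> length y")
    case True
    then have "y ! (j + n - 1)" using j n1 by (simp add: nth_append)
    from G[OF True this] obtain j' where "j' + n \<le> j + n - 1"
      "take n (drop j' y) = take (n - 1) (drop j y) @ [False]" by blast
    then show ?thesis using True n1
      by (intro exI[of _ j']) simp
  next
    case False
    then have jj: "j + n = Suc (length y)" using j by simp
    then have "b" using j n1 by (simp add: nth_append)
    from not_Dist_snoc[OF n1 len _ bT[OF this]] I obtain j' where
      "j' + n \<le> length y" "take n (drop j' y) = drop (length y - (n - 1)) y @ [False]"
      unfolding Inv_def by blast
    moreover have "j = length y - (n - 1)" using jj n1 by linarith
    ultimately show ?thesis using jj n1 len
      by (intro exI[of _ j']) simp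
  qed
  then show ?thesis using len st D unfolding Inv_def by simp
qed

lemma Inv_step: "n \<ge> 1 \<Longrightarrow> Inv n y \<Longrightarrow> Inv n (martin_step n y)"
  unfolding martin_step_def adw_Dist using Inv_snoc by auto

lemma Inv_init: "n \<ge> 1 \<Longrightarrow> Inv n (replicate (n - 1) True)"
  unfolding Inv_def Dist_def by (auto simp del: replicate.simps)

lemma Inv_iter: "n \<ge> 1 \<Longrightarrow> Inv n ((martin_step n ^^ k) (replicate (n - 1) True))"
  by (induction k) (use Inv_init Inv_step in auto)

lemma step_cases: "martin_step n y = y \<or> (\<exists>b. martin_step n y = y @ [b] \<and> Dist n (y @ [b]))"
  unfolding martin_step_def adw_Dist by auto

lemma iter_growth:
  "martin_step n ((martin_step n ^^ k) (replicate (n - 1) True)) = (martin_step n ^^ k) (replicate (n - 1) True)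
   \<or> length ((martin_step n ^^ k) (replicate (n - 1) True)) = n - 1 + k"
proof (induction k)
  case 0
  then show ?case by simp
next
  case (Suc k)
  let ?y = "(martin_step n ^^ k) (replicate (n - 1) True)"
  show ?case
  proof (cases "martin_step n ?y = ?y")
    case True
    then show ?thesis by simp
  next
    case False
    then obtain b where "martin_step n ?y = ?y @ [b]" using step_cases by blast
    then show ?thesis using Suc False by simp
  qed
qed

lemma card_bool_lists: "card {xs :: bool list. length xs = n} = 2 ^ n"
  using card_lists_length_eq[of "UNIV :: bool set" n] by simp

lemma finite_bool_lists: "finite {xs :: bool list. length xs = n}"
  using finite_lists_length_eq[of "UNIV :: bool set" n] by simp

lemma Dist_bound:
  assumes "Dist n y"
  shows "length y + 1 - n \<le> 2 ^ n"
proof -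
  let ?f = "\<lambda>i. take n (drop i y)"
  have "inj_on ?f {0..<length y + 1 - n}"
    using assms unfolding Dist_def inj_on_def by auto
  moreover have "?f ` {0..<length y + 1 - n} \<subseteq> {xs. length xs = n}" by auto
  ultimately have "card {0..<length y + 1 - n} \<le> card {xs :: bool list. length xs = n}"
    using card_inj_on_le finite_bool_lists by blast
  then show ?thesis by (simp add: card_bool_lists)
qed

lemma martin_fix: "n \<ge> 1 \<Longrightarrow> martin_step n (martin n) = martin n"
proof (rule ccontr)
  assume n1: "n \<ge> 1" and ne: "martin_step n (martin n) \<noteq> martin n"
  then have l: "length (martin n) = n - 1 + 2 ^ n"
    using iter_growth[of n "2 ^ n"] unfolding martin_def by auto
  from ne obtain b where "Dist n (martin n @ [b])" using step_cases by metis
  from Dist_bound[OF this] show False using l n1 by simp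
qed


context
  fixes n :: nat
  assumes n2: "2 \<le> n"
begin

definition Wn :: "bool list \<Rightarrow> bool" where
  "Wn v \<longleftrightarrow> (\<exists>i. i + n \<le> length (martin n) \<and> take n (drop i (martin n)) = v)"

definition Occ :: "bool list \<Rightarrow> nat \<Rightarrow> bool" where
  "Occ u p \<longleftrightarrow> p + (n - 1) \<le> length (martin n) \<and> take (n - 1) (drop p (martin n)) = u"

definition full :: "bool list \<Rightarrow> bool" where
  "full u \<longleftrightarrow> Wn (u @ [False]) \<and> Wn (u @ [True])"

lemma M_Inv: "Inv n (martin n)"
  using Inv_iter[of n "2 ^ n"] n2 unfolding martin_def by simp

lemma M_len1: "n - 1 \<le> length (martin n)"
  and M_start: "take (n - 1) (martin n) = replicate (n - 1) True"
  and M_Dist: "Dist n (martin n)"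
  and M_G: "\<And>j. j + n \<le> length (martin n) \<Longrightarrow> martin n ! (j + n - 1) \<Longrightarrow>
       (\<exists>j'. j' + n \<le> j + n - 1 \<and> take n (drop j' (martin n)) = take (n - 1) (drop j (martin n)) @ [False])"
  using M_Inv unfolding Inv_def by auto

lemma M_end_full: "Wn (drop (length (martin n) - (n - 1)) (martin n) @ [b])"
proof -
  have fx: "martin_step n (martin n) = martin n" using martin_fix n2 by simp
  have "\<not> Dist n (martin n @ [b])"
  proof
    assume d: "Dist n (martin n @ [b])"
    show False
    proof (cases b)
      case True
      then show ?thesis using fx d unfolding martin_step_def adw_Dist by (auto split: if_splits)
    next
      case False
      then show ?thesis using fx d unfolding martin_step_def adw_Dist by (auto split: if_splits)
    qed
  qed
  from not_Dist_snoc[OF _ M_len1 M_Dist this] n2 show ?thesis unfolding Wn_def by auto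
qed

lemma pred_window:
  assumes "0 < p" "p + (n - 1) \<le> length (martin n)"
  shows "take n (drop (p - 1) (martin n)) = martin n ! (p - 1) # take (n - 1) (drop p (martin n))"
proof -
  have "p - 1 < length (martin n)" using assms n2 by linarith
  then have "drop (p - 1) (martin n) = martin n ! (p - 1) # drop p (martin n)"
    using Cons_nth_drop_Suc[of "p - 1" "martin n"] assms(1) by simp
  moreover have "n = Suc (n - 1)" using n2 by simp
  ultimately show ?thesis by (metis take_Suc_Cons)
qed

lemma K:
  assumes "p1 \<noteq> p2" "0 < p1" "0 < p2" "Occ u p1" "Occ u p2"
  shows "Wn (c # u)"
proof -
  have w1: "take n (drop (p1 - 1) (martin n)) = martin n ! (p1 - 1) # u"
    using pred_window[OF assms(2)] assms(4) unfolding Occ_def by simp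
  have w2: "take n (drop (p2 - 1) (martin n)) = martin n ! (p2 - 1) # u"
    using pred_window[OF assms(3)] assms(5) unfolding Occ_def by simp
  have b1: "p1 - 1 + n \<le> length (martin n)" "p2 - 1 + n \<le> length (martin n)"
    using assms n2 unfolding Occ_def by auto
  have "martin n ! (p1 - 1) \<noteq> martin n ! (p2 - 1)"
  proof
    assume "martin n ! (p1 - 1) = martin n ! (p2 - 1)"
    then have "take n (drop (p1 - 1) (martin n)) = take n (drop (p2 - 1) (martin n))" using w1 w2 by simp
    then have "p1 - 1 = p2 - 1" using b1 M_Dist unfolding Dist_def by blast
    then show False using assms by simp
  qed
  then have "c = martin n ! (p1 - 1) \<or> c = martin n ! (p2 - 1)" by blast
  then show ?thesis
  proof
    assume "c = martin n ! (p1 - 1)"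
    then show ?thesis using w1 b1 unfolding Wn_def by auto
  next
    assume "c = martin n ! (p2 - 1)"
    then show ?thesis using w2 b1 unfolding Wn_def by auto
  qed
qed

lemma Three:
  assumes "p1 \<noteq> p2" "p1 \<noteq> p3" "p2 \<noteq> p3" "0 < p1" "0 < p2" "0 < p3"
    "Occ u p1" "Occ u p2" "Occ u p3"
  shows False
proof -
  have w: "take n (drop (p - 1) (martin n)) = martin n ! (p - 1) # u"
    and b: "p - 1 + n \<le> length (martin n)"
    if "0 < p" "Occ u p" for p
    using pred_window[OF that(1)] that n2 unfolding Occ_def by auto
  have key: "q1 = q2" if "0 < q1" "0 < q2" "Occ u q1" "Occ u q2"
    "martin n ! (q1 - 1) = martin n ! (q2 - 1)" for q1 q2
  proof -
    have "take n (drop (q1 - 1) (martin n)) = take n (drop (q2 - 1) (martin n))"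
      using w[OF that(1,3)] w[OF that(2,4)] that(5) by simp
    then have "q1 - 1 = q2 - 1" using b[OF that(1,3)] b[OF that(2,4)] M_Dist unfolding Dist_def by blast
    then show ?thesis using that(1,2) by simp
  qed
  have "martin n ! (p1 - 1) = martin n ! (p2 - 1) \<or> martin n ! (p1 - 1) = martin n ! (p3 - 1)
     \<or> martin n ! (p2 - 1) = martin n ! (p3 - 1)" by blast
  then show False using key assms by blast
qed

lemma win_occ:
  assumes "Wn (u @ [b])"
  shows "\<exists>p. Occ u p \<and> p + n \<le> length (martin n) \<and> take n (drop p (martin n)) = u @ [b]"
proof -
  obtain p where p: "p + n \<le> length (martin n)" "take n (drop p (martin n)) = u @ [b]"
    using assms unfolding Wn_def by auto
  have "length (take n (drop p (martin n))) = n" using p(1) by simp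
  with p(2) have lu: "length u = n - 1" by simp
  have "take (n - 1) (drop p (martin n)) = take (n - 1) (take n (drop p (martin n)))" by simp
  also have "\<dots> = u" using p(2) lu by simp
  finally have "Occ u p" using p n2 unfolding Occ_def by simp
  then show ?thesis using p by blast
qed

lemma occ0: "Occ u 0 \<Longrightarrow> u = replicate (n - 1) True"
  using M_start unfolding Occ_def by simp

lemma e_start: "drop (length (martin n) - (n - 1)) (martin n) = replicate (n - 1) True"
  (is "?e = _")
proof (rule ccontr)
  assume ne: "?e \<noteq> replicate (n - 1) True"
  obtain p0 where p0: "Occ ?e p0" "p0 + n \<le> length (martin n)" "take n (drop p0 (martin n)) = ?e @ [False]"
    using win_occ[OF M_end_full] by blast
  obtain p1 where p1: "Occ ?e p1" "p1 + n \<le> length (martin n)" "take n (drop p1 (martin n)) = ?e @ [True]"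
    using win_occ[OF M_end_full] by blast
  have "p0 \<noteq> p1" using p0(3) p1(3) by auto
  moreover have "Occ ?e (length (martin n) - (n - 1))" using M_len1 unfolding Occ_def by simp
  moreover have "0 < p0" "0 < p1" using p0(1) p1(1) occ0 ne by (auto intro: gr0I)
  moreover have "0 < length (martin n) - (n - 1)" using p0(2) n2 by linarith
  ultimately show False using Three[of p0 p1 "length (martin n) - (n - 1)"] p0 p1 n2 by fastforce
qed

lemma e_full: "full (replicate (n - 1) True)"
  using M_end_full e_start unfolding full_def by metis

lemma full_step:
  assumes f: "full (p @ [True])"
  shows "full (c # p)"
proof -
  let ?u = "p @ [True]"
  let ?L = "length (martin n) - (n - 1)"
  obtain j0 where j0: "Occ ?u j0" "j0 + n \<le> length (martin n)" "take n (drop j0 (martin n)) = ?u @ [False]"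
    using win_occ f unfolding full_def by blast
  obtain j1 where j1: "Occ ?u j1" "j1 + n \<le> length (martin n)" "take n (drop j1 (martin n)) = ?u @ [True]"
    using win_occ f unfolding full_def by blast
  have "j0 \<noteq> j1" using j0(3) j1(3) by auto
  have "\<exists>q1 q2. q1 \<noteq> q2 \<and> 0 < q1 \<and> 0 < q2 \<and> Occ ?u q1 \<and> Occ ?u q2"
  proof (cases "?u = replicate (n - 1) True")
    case True
    have oL: "Occ ?u ?L" using M_len1 e_start True unfolding Occ_def by simp
    have "0 < ?L" "j0 < ?L" "j1 < ?L" using j0(2) j1(2) n2 by linarith+
    show ?thesis
    proof (cases "j0 = 0")
      case True
      then show ?thesis using oL j1(1) \<open>j0 \<noteq> j1\<close> \<open>0 < ?L\<close> \<open>j1 < ?L\<close>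
        by (intro exI[of _ j1] exI[of _ ?L]) auto
    next
      case False
      then show ?thesis using oL j0(1) \<open>0 < ?L\<close> \<open>j0 < ?L\<close>
        by (intro exI[of _ j0] exI[of _ ?L]) auto
    qed
  next
    case False
    then have "0 < j0" "0 < j1" using occ0 j0(1) j1(1) by (auto intro: gr0I)
    then show ?thesis using j0(1) j1(1) \<open>j0 \<noteq> j1\<close> by blast
  qed
  then obtain q1 q2 where "q1 \<noteq> q2" "0 < q1" "0 < q2" "Occ ?u q1" "Occ ?u q2" by blast
  from K[OF this] have "Wn (c # ?u)" .
  then obtain j where j: "j + n \<le> length (martin n)" "take n (drop j (martin n)) = (c # p) @ [True]"
    unfolding Wn_def by auto
  have ln: "length (take n (drop j (martin n))) = n" using j(1) by simp
  then have lp: "length (c # p) = n - 1" using j(2) by simp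
  have "martin n ! (j + n - 1) = (take n (drop j (martin n))) ! (n - 1)"
    using j(1) n2 by (simp add: nth_take)
  also have "\<dots> = ((c # p) @ [True]) ! (n - 1)" by (simp only: j(2))
  also have "\<dots> = True" using nth_append_length[of "c # p" True] by (simp only: lp)
  finally obtain j' where j': "j' + n \<le> j + n - 1"
    "take n (drop j' (martin n)) = take (n - 1) (drop j (martin n)) @ [False]"
    using M_G[OF j(1)] by blast
  have "take (n - 1) (drop j (martin n)) = take (n - 1) (take n (drop j (martin n)))" by simp
  also have "\<dots> = take (length (c # p)) ((c # p) @ [True])" by (simp only: j(2) lp)
  also have "\<dots> = c # p" by simp
  moreover have "j' + n \<le> length (martin n)" using j' j(1) by linarith
  ultimately have "Wn ((c # p) @ [False])" using j' unfolding Wn_def by auto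
  moreover have "Wn ((c # p) @ [True])" using j unfolding Wn_def by blast
  ultimately show ?thesis unfolding full_def by simp
qed

lemma all_full: "k \<le> n - 1 \<Longrightarrow> length z = k \<Longrightarrow> full (z @ replicate (n - 1 - k) True)"
proof (induction k arbitrary: z)
  case 0
  then show ?case using e_full by simp
next
  case (Suc k)
  then obtain c z' where z: "z = c # z'" "length z' = k" by (cases z) auto
  have f: "full (z' @ replicate (n - 1 - k) True)" using Suc z by simp
  have "replicate (n - 1 - k) True = replicate (n - 1 - Suc k) True @ [True]"
  proof -
    have "n - 1 - k = Suc (n - 1 - Suc k)" using Suc.prems(1) by linarith
    then show ?thesis by (simp add: replicate_append_same)
  qed
  then have "full ((z' @ replicate (n - 1 - Suc k) True) @ [True])" using f by simp
  from full_step[OF this, of c] show ?case using z by simp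
qed

lemma all_win: "length v = n \<Longrightarrow> Wn v"
proof -
  assume lv: "length v = n"
  then have "v \<noteq> []" using n2 by auto
  have "full (butlast v @ replicate (n - 1 - (n - 1)) True)"
    using all_full[of "n - 1" "butlast v"] lv by simp
  then have "full (butlast v)" by simp
  then have "Wn (butlast v @ [last v])" unfolding full_def by (cases "last v") simp_all
  then show "Wn v" using \<open>v \<noteq> []\<close> by simp
qed

lemma len_M: "length (martin n) = 2 ^ n + n - 1"
proof -
  let ?f = "\<lambda>i. take n (drop i (martin n))"
  have "{xs. length xs = n} \<subseteq> ?f ` {0..<length (martin n) + 1 - n}"
  proof
    fix v :: "bool list" assume "v \<in> {xs. length xs = n}"
    then obtain i where "i + n \<le> length (martin n)" "?f i = v" using all_win unfolding Wn_def by auto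
    then have iA: "i \<in> {0..<length (martin n) + 1 - n}" by simp
    from rev_image_eqI[OF iA, of v ?f] \<open>?f i = v\<close> show "v \<in> ?f ` {0..<length (martin n) + 1 - n}" by simp
  qed
  then have "card {xs :: bool list. length xs = n} \<le> card (?f ` {0..<length (martin n) + 1 - n})"
    by (intro card_mono) auto
  also have "\<dots> \<le> card {0..<length (martin n) + 1 - n}" by (rule card_image_le) simp
  also have "\<dots> = length (martin n) + 1 - n" by simp
  finally have "2 ^ n \<le> length (martin n) + 1 - n" by (simp add: card_bool_lists)
  moreover have "length (martin n) + 1 - n \<le> 2 ^ n" using Dist_bound M_Dist by blast
  ultimately show ?thesis using M_len1 n2 by linarith
qed

lemma M_split: "martin n = replicate (n - 1) True @ db n"
  using M_start append_take_drop_id[of "n - 1" "martin n"] unfolding db_def by simp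

lemma D_len: "length (db n) = 2 ^ n"
  using len_M n2 unfolding db_def by simp

lemma M_nth: "martin n ! i = (if i < n - 1 then True else db n ! (i - (n - 1)))"
  by (subst M_split) (simp add: nth_append)

lemma D_nth: "db n ! k = martin n ! (k + (n - 1))"
  using M_nth by simp

lemma D_end: assumes "2 ^ n - (n - 1) \<le> k" "k < 2 ^ n" shows "db n ! k = True"
proof -
  let ?L = "length (martin n) - (n - 1)"
  have L: "?L = 2 ^ n" using len_M n2 by simp
  have "db n ! k = martin n ! (?L + (k + (n - 1) - 2 ^ n))" using D_nth assms L by simp
  also have "\<dots> = drop ?L (martin n) ! (k + (n - 1) - 2 ^ n)" using L len_M by simp
  also have "\<dots> = True" using e_start assms by simp
  finally show ?thesis .
qed

lemma D_zero0: "db n ! 0 = False"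
proof (rule ccontr)
  assume "db n ! 0 \<noteq> False"
  then have "martin n ! (0 + n - 1)" using D_nth by simp
  moreover have "0 + n \<le> length (martin n)"
  proof -
    have "n < 2 ^ n" by (rule less_exp)
    then show ?thesis using len_M by linarith
  qed
  ultimately obtain j' where "j' + n \<le> 0 + n - 1" using M_G by blast
  then show False using n2 by linarith
qed

lemma D_zero: assumes "k < n" shows "db n ! k = False"
proof (cases "k = 0")
  case True then show ?thesis using D_zero0 by simp
next
  case False
  show ?thesis
  proof (rule ccontr)
    assume "db n ! k \<noteq> False"
    then have mk: "martin n ! (k + n - 1)" using D_nth n2 by (simp add: add.commute)
    have "n < 2 ^ n" by (rule less_exp)
    then have kn: "k + n \<le> length (martin n)" using len_M assms by linarith
    obtain j' where j': "j' + n \<le> k + n - 1"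
      "take n (drop j' (martin n)) = take (n - 1) (drop k (martin n)) @ [False]"
      using M_G[OF kn mk] by blast
    let ?i = "n - 1 - k"
    have i1: "?i < n - 1" using False assms by linarith
    have "take n (drop j' (martin n)) ! ?i = martin n ! (j' + ?i)"
      using j'(1) kn i1 by (simp add: nth_take)
    also have "\<dots> = True"
    proof -
      have "j' + ?i < n - 1" using j'(1) i1 False assms by linarith
      then show ?thesis by (simp add: M_nth)
    qed
    finally have A: "take n (drop j' (martin n)) ! ?i = True" .
    have "(take (n - 1) (drop k (martin n)) @ [False]) ! ?i = take (n - 1) (drop k (martin n)) ! ?i"
      using kn i1 by (simp add: nth_append)
    also have "\<dots> = martin n ! (k + ?i)" using kn i1 by simp
    also have "\<dots> = db n ! 0" using D_nth assms by simp
    also have "\<dots> = False" by (rule D_zero0)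
    finally show False using A j'(2) by simp
  qed
qed

lemma n_decomp: "n = 2 ^ two_exp n * odd_part n"
  unfolding odd_part_def two_exp_def using multiplicity_dvd[of 2 n] by simp

lemma odd_pos: "odd_part n \<ge> 1"
proof (rule ccontr)
  assume "\<not> odd_part n \<ge> 1"
  then have "odd_part n = 0" by simp
  then show False using n_decomp n2 by simp
qed

lemma odd1: "odd_part n = 1 \<Longrightarrow> two_exp n \<ge> 1"
  using n_decomp n2 by (cases "two_exp n") auto

lemma take_E1: "take (n - 1) (db_rot n 1) = take (n - 1) (db n)"
proof (rule nth_equalityI)
  have "n < 2 ^ n" by (rule less_exp)
  then have a: "n - 1 \<le> 2 ^ n - 1" and b: "n - 1 \<le> 2 ^ n" by linarith+
  show "length (take (n - 1) (db_rot n 1)) = length (take (n - 1) (db n))"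
    using D_len a b unfolding db_rot_def by (simp add: min_absorb2)
next
  fix i assume "i < length (take (n - 1) (db_rot n 1))"
  then have i: "i < n - 1" by simp
  have "n < 2 ^ n" by (rule less_exp)
  then have "take (n - 1) (db_rot n 1) ! i = db n ! (Suc i)"
    using i D_len unfolding db_rot_def by (simp add: nth_append)
  also have "\<dots> = False" using D_zero i by simp
  also have "\<dots> = db n ! i" using D_zero i by simp
  also have "\<dots> = take (n - 1) (db n) ! i" using i by simp
  finally show "take (n - 1) (db_rot n 1) ! i = take (n - 1) (db n) ! i" .
qed

lemma S_struct: "\<exists>E rest. S_blk n = db n @ E @ rest \<and> length E = 2 ^ n \<and> take (n - 1) E = take (n - 1) (db n)"
proof -
  let ?s = "two_exp n" and ?t = "odd_part n"
  have "[0..<2 ^ ?s] = 0 # [1..<2 ^ ?s]" by (simp add: upt_conv_Cons)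
  then have S: "S_blk n = B_blk n 0 @ concat (map (B_blk n) [1..<2 ^ ?s])"
    unfolding S_blk_def by simp
  have r0: "db_rot n 0 = db n" unfolding db_rot_def by simp
  show ?thesis
  proof (cases "?t = 1")
    case True
    then have "1 < (2::nat) ^ ?s" using odd1[OF True] by (intro one_less_power) auto
    then have "[1..<2 ^ ?s] = 1 # [Suc 1..<2 ^ ?s]" by (simp add: upt_conv_Cons)
    then have "S_blk n = db n @ db_rot n 1 @ concat (map (B_blk n) [Suc 1..<2 ^ ?s])"
      using S True r0 unfolding B_blk_def by simp
    moreover have "length (db_rot n 1) = 2 ^ n" using D_len unfolding db_rot_def by simp
    ultimately show ?thesis using take_E1 by blast
  next
    case False
    then have "?t = Suc (Suc (?t - 2))" using odd_pos by linarith
    then have "B_blk n 0 = db n @ db n @ concat (replicate (?t - 2) (db n))"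
      unfolding B_blk_def r0 by (metis concat.simps(2) replicate_Suc append.assoc)
    then have "S_blk n = db n @ db n @ (concat (replicate (?t - 2) (db n)) @ concat (map (B_blk n) [1..<2 ^ ?s]))"
      using S by simp
    then show ?thesis using D_len by blast
  qed
qed

definition fpos :: "nat \<Rightarrow> nat" where
  "fpos q = (if n - 1 \<le> q then q - (n - 1) else q + 2 ^ n - (n - 1))"

lemma fpos_inj: "q1 < 2 ^ n \<Longrightarrow> q2 < 2 ^ n \<Longrightarrow> fpos q1 = fpos q2 \<Longrightarrow> q1 = q2"
proof -
  assume a: "q1 < 2 ^ n" "q2 < 2 ^ n" "fpos q1 = fpos q2"
  have nn: "n < 2 ^ n" by (rule less_exp)
  have f: "fpos q = (if n - 1 \<le> q then q - (n - 1) else q + 2 ^ n - (n - 1))" for q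
    by (simp add: fpos_def)
  show "q1 = q2"
  proof (cases "n - 1 \<le> q1"; cases "n - 1 \<le> q2")
    assume "n - 1 \<le> q1" "n - 1 \<le> q2"
    then have "fpos q1 = q1 - (n - 1)" "fpos q2 = q2 - (n - 1)" using f by presburger+
    then show ?thesis using a \<open>n - 1 \<le> q1\<close> \<open>n - 1 \<le> q2\<close> by linarith
  next
    assume "n - 1 \<le> q1" "\<not> n - 1 \<le> q2"
    then have "fpos q1 = q1 - (n - 1)" "fpos q2 = q2 + 2 ^ n - (n - 1)" using f by presburger+
    then show ?thesis using a nn \<open>n - 1 \<le> q1\<close> \<open>\<not> n - 1 \<le> q2\<close> by linarith
  next
    assume "\<not> n - 1 \<le> q1" "n - 1 \<le> q2"
    then have "fpos q2 = q2 - (n - 1)" "fpos q1 = q1 + 2 ^ n - (n - 1)" using f by presburger+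
    then show ?thesis using a nn \<open>\<not> n - 1 \<le> q1\<close> \<open>n - 1 \<le> q2\<close> by linarith
  next
    assume "\<not> n - 1 \<le> q1" "\<not> n - 1 \<le> q2"
    then have "fpos q2 = q2 + 2 ^ n - (n - 1)" "fpos q1 = q1 + 2 ^ n - (n - 1)" using f by presburger+
    then show ?thesis using a nn by linarith
  qed
qed

lemma G:
  assumes T1: "length T = 2 ^ n + n"
    and T2: "\<And>k. k < 2 ^ n \<Longrightarrow> T ! k = db n ! k"
    and T3: "\<And>k. k < n - 1 \<Longrightarrow> T ! (2 ^ n + k) = db n ! k"
    and qm: "q + m \<le> length (martin n)" and mn: "m \<le> n"
  shows "fpos q + m \<le> 2 ^ n + n - 1 \<and> take m (drop (fpos q) T) = take m (drop q (martin n))"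
proof -
  have lM: "length (martin n) = 2 ^ n + n - 1" by (rule len_M)
  have nn: "n < 2 ^ n" by (rule less_exp)
  have b: "fpos q + m \<le> 2 ^ n + n - 1"
  proof (cases "n - 1 \<le> q")
    case True
    then have "fpos q = q - (n - 1)" unfolding fpos_def by simp
    then show ?thesis using True qm lM by linarith
  next
    case False
    then have "fpos q = q + 2 ^ n - (n - 1)" unfolding fpos_def by simp
    then show ?thesis using False mn nn by linarith
  qed
  have "take m (drop (fpos q) T) = take m (drop q (martin n))"
  proof (rule nth_equalityI)
    show "length (take m (drop (fpos q) T)) = length (take m (drop q (martin n)))"
      using b qm T1 by simp
  next
    fix i assume "i < length (take m (drop (fpos q) T))"
    then have i: "i < m" by simp
    have l: "take m (drop (fpos q) T) ! i = T ! (fpos q + i)"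
      using i b T1 by simp
    have r: "take m (drop q (martin n)) ! i = martin n ! (q + i)"
      using i qm by simp
    have "T ! (fpos q + i) = martin n ! (q + i)"
    proof (cases "n - 1 \<le> q")
      case True
      then have "fpos q + i = q + i - (n - 1)" "q + i - (n - 1) < 2 ^ n"
        unfolding fpos_def using i qm lM by auto
      then show ?thesis using T2 True by (simp add: M_nth)
    next
      case False
      then have fq: "fpos q = q + 2 ^ n - (n - 1)" unfolding fpos_def by simp
      show ?thesis
      proof (cases "q + i < n - 1")
        case True
        then have "fpos q + i < 2 ^ n" "2 ^ n - (n - 1) \<le> fpos q + i" using fq nn by linarith+
        then show ?thesis using T2 D_end True by (simp add: M_nth)
      next
        case F2: False
        then have "fpos q + i = 2 ^ n + (q + i - (n - 1))" "q + i - (n - 1) < n - 1"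
          using fq nn False i mn by linarith+
        then have "T ! (fpos q + i) = db n ! (q + i - (n - 1))" using T3 by simp
        then show ?thesis using F2 by (simp add: M_nth)
      qed
    qed
    then show "take m (drop (fpos q) T) ! i = take m (drop q (martin n)) ! i" using l r by simp
  qed
  then show ?thesis using b by simp
qed

lemma occ_transfer:
  assumes "fpos q + length u \<le> length T" "take (length u) (drop (fpos q) T) = u"
  shows "length P + fpos q \<in> occurrences u (P @ T)"
  using assms unfolding occurrences_def by simp

lemma main: "length v = n \<Longrightarrow> v \<in> ppm_contexts (S_prefix n @ take (2 ^ n + n) (S_blk n))"
proof -
  assume lv: "length v = n"
  obtain E rest where ER: "S_blk n = db n @ E @ rest" "length E = 2 ^ n" "take (n - 1) E = take (n - 1) (db n)"
    using S_struct by blast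
  have nn: "n < 2 ^ n" by (rule less_exp)
  define T where "T = db n @ take n E"
  have Tdef: "take (2 ^ n + n) (S_blk n) = T" unfolding T_def using ER D_len nn by simp
  have T1: "length T = 2 ^ n + n" unfolding T_def using D_len ER(2) nn by simp
  have T2: "T ! k = db n ! k" if "k < 2 ^ n" for k unfolding T_def using that D_len by (simp add: nth_append)
  have T3: "T ! (2 ^ n + k) = db n ! k" if k: "k < n - 1" for k
  proof -
    have "T ! (2 ^ n + k) = E ! k" unfolding T_def using k D_len by (simp add: nth_append)
    also have "\<dots> = take (n - 1) E ! k" using k by simp
    also have "\<dots> = take (n - 1) (db n) ! k" using ER(3) by simp
    also have "\<dots> = db n ! k" using k by simp
    finally show ?thesis .
  qed
  let ?P = "S_prefix n"
  let ?x = "?P @ T"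
  have "v \<noteq> []" using lv n2 by auto
  define w where "w = butlast v"
  define b where "b = last v"
  have v: "v = w @ [b]" unfolding w_def b_def using \<open>v \<noteq> []\<close> by simp
  have lw: "length w = n - 1" unfolding w_def using lv by simp
  obtain q where q: "q + n \<le> length (martin n)" "take n (drop q (martin n)) = v"
    using all_win[OF lv] unfolding Wn_def by blast
  from G[OF T1 T2 T3 q(1) order_refl] q(2)
  have g: "fpos q + n \<le> 2 ^ n + n - 1" "take n (drop (fpos q) T) = v" by auto
  let ?c = "T ! (fpos q + n)"
  have "take (Suc n) (drop (fpos q) T) = take n (drop (fpos q) T) @ [drop (fpos q) T ! n]"
    using g(1) T1 n2 by (intro take_Suc_conv_app_nth) simp
  then have "take (Suc n) (drop (fpos q) T) = w @ [b, ?c]" using g(2) v g(1) T1 by simp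
  then have "length ?P + fpos q \<in> occurrences (w @ [b, ?c]) ?x"
    using occ_transfer[of q "w @ [b, ?c]" T ?P] g(1) T1 lw n2 by simp
  then have B: "occurs (w @ [b, ?c]) ?x" unfolding occurs_def by blast
  have "full (w @ replicate (n - 1 - (n - 1)) True)" using all_full[of "n - 1" w] lw by simp
  then have fw: "full w" by simp
  obtain j0 where j0: "Occ w j0" "j0 + n \<le> length (martin n)" "take n (drop j0 (martin n)) = w @ [False]"
    using win_occ fw unfolding full_def by blast
  obtain j1 where j1: "Occ w j1" "j1 + n \<le> length (martin n)" "take n (drop j1 (martin n)) = w @ [True]"
    using win_occ fw unfolding full_def by blast
  have "j0 \<noteq> j1" using j0(3) j1(3) by auto
  have jl: "j0 < 2 ^ n" "j1 < 2 ^ n" using j0(2) j1(2) len_M n2 by linarith+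
  have oc: "length ?P + fpos j \<in> occurrences w ?x" if "Occ w j" "j + n \<le> length (martin n)" for j
  proof -
    have "j + (n - 1) \<le> length (martin n)" "n - 1 \<le> n" using that by auto
    from G[OF T1 T2 T3 this] that(1) have "fpos j + (n - 1) \<le> 2 ^ n + n - 1"
      "take (n - 1) (drop (fpos j) T) = w" unfolding Occ_def by auto
    then show ?thesis using occ_transfer[of j w T ?P] lw T1 by simp
  qed
  have ne: "length ?P + fpos j0 \<noteq> length ?P + fpos j1" using fpos_inj jl \<open>j0 \<noteq> j1\<close> by auto
  have fin: "finite (occurrences w ?x)"
    by (rule finite_subset[of _ "{..length ?x}"]) (auto simp: occurrences_def)
  have "card {length ?P + fpos j0, length ?P + fpos j1} \<le> card (occurrences w ?x)"
    using oc[OF j0(1,2)] oc[OF j1(1,2)] fin by (intro card_mono) auto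
  then have A: "card (occurrences w ?x) \<ge> 2" using ne by simp
  show ?thesis unfolding Tdef ppm_contexts_def using A B v by blast
qed

end


theorem lemma2:
  fixes n :: nat
  assumes "n \<ge> 2"
  shows "\<forall>w. length w = n \<longrightarrow>
           w \<in> ppm_contexts (S_prefix n @ take (2 ^ n + n) (S_blk n))"
  using main[OF assms] by blast

end
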